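(* Let $p$ be uniformly distributed on $(0,1)$ and, conditionally on $p$, let $X_1,X_2,\dots$ be i.i.d. with $P(X_i=j\mid p)=p(1-p)^{j-1}$, $j=1,2,\dots$. Let $K_n$ be the number of distinct values among $X_1,\dots,X_n$, and define $$\overrightarrow\nu(x)=\int_0^1\#\{j\ge1:\ p(1-p)^{j-1}\ge x\}\,dp,\qquad x\in(0,1).$$ Then $$\overrightarrow\nu(x)=\tfrac12\big(\log(1/x)\big)^2-\gamma\log(1/x)+O(1),\qquad x\to0,$$ and $$\mathrm{E}(K_n)=\tfrac12(\log n)^2+o(\log n),\qquad n\to\infty,$$ where $\gamma$ is the Euler–Mascheroni constant.
   Context: This is the geometric stick-breaking process with uniform prior on the success probability $p$; $\mathrm{E}(K_n)$ is the unconditional expectation (averaging over $p$ and the draws). *)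

theory Defs
  imports "HOL-Probability.Probability" "HOL-Library.Landau_Symbols"
begin

text \<open>Law of X_i given p: P(X_i = j | p) = p (1-p)^(j-1), j = 1,2,...
  (the library geometric_pmf lives on 0,1,2,... so we shift by one).\<close>
definition geom1_pmf :: "real \<Rightarrow> nat pmf" where
  "geom1_pmf p = map_pmf Suc (geometric_pmf p)"

definition sample_pmf :: "real \<Rightarrow> nat \<Rightarrow> (nat \<Rightarrow> nat) pmf" where
  "sample_pmf p n = Pi_pmf {..<n} 0 (\<lambda>_. geom1_pmf p)"

definition K :: "nat \<Rightarrow> (nat \<Rightarrow> nat) \<Rightarrow> nat" where
  "K n X = card (X ` {..<n})"

definition EK :: "nat \<Rightarrow> real" where
  "EK n = (LBINT p:{0<..<1}. measure_pmf.expectation (sample_pmf p n) (\<lambda>X. real (K n X)))"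

definition nu :: "real \<Rightarrow> real" where
  "nu x = (LBINT p:{0<..<1}. real (card {j::nat. 1 \<le> j \<and> p * (1 - p) ^ (j - 1) \<ge> x}))"

end

theory Submission
  imports Defs "HOL-Real_Asymp.Real_Asymp"
begin

lemma stepA:
  assumes p: "0 < p" "p < 1"
  shows "((\<lambda>t. (1-p) powr t) has_integral (1-(1-p)^k)/(-ln(1-p))) {0..real k}"
proof -
  have l: "ln (1-p) < 0" using p by simp
  have "((\<lambda>t. (1-p) powr t) has_integral ((1-p) powr (real k) / ln(1-p) - (1-p) powr 0 / ln (1-p))) {0..real k}"
  proof (rule fundamental_theorem_of_calculus)
    show "0 \<le> real k" by simp
    fix t assume "t \<in> {0..real k}"
    have "((\<lambda>t. exp (t * ln (1-p)) / ln(1-p)) has_real_derivative exp (t * ln (1-p))) (at t within {0..real k})"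
      using p l by (auto intro!: derivative_eq_intros)
    moreover have "\<And>t. exp (t * ln (1-p)) = (1-p) powr t" using p by (simp add: powr_def)
    ultimately show "((\<lambda>t. (1-p) powr t / ln(1-p)) has_vector_derivative (1-p) powr t) (at t within {0..real k})"
      unfolding has_real_derivative_iff_has_vector_derivative[symmetric] by simp
  qed
  also have "((1-p) powr (real k) / ln(1-p) - (1-p) powr 0 / ln (1-p)) = (1-(1-p)^k)/(-ln(1-p))"
    using p l by (simp add: powr_realpow field_simps)
  finally show ?thesis .
qed

lemma stepB:
  fixes t :: real
  assumes t: "0 \<le> t"
  shows "((\<lambda>p. (1-p) powr t) has_integral 1/(t+1)) {0..1}"
proof -
  define F where "F = (\<lambda>p::real. (1 - p) powr (t + 1) / (t + 1))"
  have "((\<lambda>p. (1-p) powr t) has_integral ((\<lambda>p. - F p) 1 - (\<lambda>p. - F p) 0)) {0..1::real}"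
  proof (rule fundamental_theorem_of_calculus_interior)
    show "0 \<le> (1::real)" by simp
    show "continuous_on {0..1} (\<lambda>p::real. - F p)"
      unfolding F_def using t by (intro continuous_intros continuous_on_powr') auto
    fix p::real assume "p \<in> {0<..<1}"
    then have "((\<lambda>p. (1-p) powr (t+1)) has_real_derivative (t+1) * (1-p) powr (t+1 - of_nat 1) * (-1)) (at p)"
      by (intro DERIV_fun_powr derivative_eq_intros) auto
    then have "((\<lambda>p. - ((1-p) powr (t+1) / (t+1))) has_real_derivative - ((t+1) * (1-p) powr (t+1 - of_nat 1) * (-1) / (t+1))) (at p)"
      by (intro DERIV_minus DERIV_cdivide)
    then have "((\<lambda>p. - F p) has_real_derivative (1-p) powr t) (at p)"
      unfolding F_def using t by simp
    then show "((\<lambda>p. - F p) has_vector_derivative (1-p) powr t) (at p)"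
      unfolding has_real_derivative_iff_has_vector_derivative[symmetric] .
  qed
  then show ?thesis using t by (simp add: F_def)
qed

lemma stepC:
  "((\<lambda>t. 1/(t+1)) has_integral ln (real k+1)) {0..real k}"
proof -
  have "((\<lambda>t. 1/(t+1)) has_integral (ln (real k + 1) - ln (0+1))) {0..real k}"
  proof (rule fundamental_theorem_of_calculus)
    show "0 \<le> real k" by simp
    fix t assume "t \<in> {0..real k}"
    then show "((\<lambda>t. ln (t+1)) has_vector_derivative 1/(t+1)) (at t within {0..real k})"
      unfolding has_real_derivative_iff_has_vector_derivative[symmetric]
      by (auto intro!: derivative_eq_intros simp: field_simps)
  qed
  then show ?thesis by simp
qed

lemma frullani:
  "((\<lambda>p. (1-(1-p)^k)/(-ln(1-p))) has_integral ln(real k+1)) {0..1}"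
proof -
  define Q where "Q = (\<lambda>p::real. (1-(1-p)^k)/(-ln(1-p)))"
  define f where "f = (\<lambda>p t::real. indicator {0<..<1} p * indicator {0..real k} t * (1-p) powr t)"
  have meas: "(\<lambda>(p,t). ennreal (f p t)) \<in> borel_measurable (lborel \<Otimes>\<^sub>M lborel)"
    unfolding f_def by measurable
  have Qnn: "p \<in> {0<..<1} \<Longrightarrow> 0 \<le> Q p" for p
    unfolding Q_def by (auto intro!: divide_nonneg_nonneg simp: power_le_one simp del: divide_minus_right)
  have in1: "(\<integral>\<^sup>+t. ennreal (f p t) \<partial>lborel) = ennreal (indicator {0<..<1} p * Q p)" for p
  proof (cases "p \<in> {0<..<1}")
    case True
    have "(\<integral>\<^sup>+t. ennreal (f p t) \<partial>lborel) = (\<integral>\<^sup>+t. ennreal ((1-p) powr t) * indicator {0..real k} t \<partial>lborel)"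
      using True by (intro nn_integral_cong) (auto simp: f_def indicator_def)
    also have "\<dots> = ennreal (Q p)"
      using True stepA[of p k] unfolding Q_def by (intro nn_integral_has_integral_lebesgue') auto
    finally show ?thesis using True by simp
  next
    case False
    then show ?thesis by (simp add: f_def)
  qed
  have in2: "(\<integral>\<^sup>+p. ennreal (f p t) \<partial>lborel) = ennreal (1/(t+1)) * indicator {0..real k} t" for t
  proof (cases "t \<in> {0..real k}")
    case True
    have "(\<integral>\<^sup>+p. ennreal (f p t) \<partial>lborel) = (\<integral>\<^sup>+p. ennreal ((1-p) powr t) * indicator {0<..<1} p \<partial>lborel)"
      using True by (intro nn_integral_cong) (auto simp: f_def indicator_def)
    also have "\<dots> = ennreal (1/(t+1))"
      using True stepB[of t] by (intro nn_integral_has_integral_lebesgue') (auto simp: has_integral_Icc_iff_Ioo)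
    finally show ?thesis using True by simp
  next
    case False
    then show ?thesis by (simp add: f_def)
  qed
  have "(\<integral>\<^sup>+t. (\<integral>\<^sup>+p. ennreal (f p t) \<partial>lborel) \<partial>lborel) = (\<integral>\<^sup>+p. (\<integral>\<^sup>+t. ennreal (f p t) \<partial>lborel) \<partial>lborel)"
    by (rule lborel_pair.Fubini'[OF meas])
  also have "\<dots> = (\<integral>\<^sup>+p. ennreal (indicator {0<..<1} p * Q p) \<partial>lborel)"
    by (simp add: in1)
  moreover have "(\<integral>\<^sup>+t. ennreal (1/(t+1)) * indicator {0..real k} t \<partial>lborel) = ennreal(ln(real k+1))"
    by (rule nn_integral_has_integral_lebesgue'[OF _ stepC]) auto
  ultimately have eq: "(\<integral>\<^sup>+p. ennreal (indicator {0<..<1} p * Q p) \<partial>lborel) = ennreal (ln (real k + 1))"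
    by (simp only: in2)
  have "((\<lambda>p. indicator {0<..<1} p * Q p) has_integral ln (real k + 1)) UNIV"
  proof (rule nn_integral_has_integral)
    show "(\<lambda>p. indicator {0<..<1} p * Q p) \<in> borel_measurable borel"
      unfolding Q_def by measurable
    show "0 \<le> indicator {0<..<1} p * Q p" for p
      using Qnn[of p] by (auto simp: indicator_def)
  qed (use eq in auto)
  moreover have "(\<lambda>p. indicator {0<..<1} p * Q p) = (\<lambda>p. if p \<in> {0<..<1} then Q p else 0)"
    by (auto simp: indicator_def fun_eq_iff)
  ultimately have "(Q has_integral ln (real k + 1)) {0<..<1}"
    by (simp only: has_integral_restrict_UNIV)
  then show ?thesis unfolding Q_def by (simp add: has_integral_Icc_iff_Ioo)
qed

lemma r_bounds:
  fixes p :: real assumes p: "0 < p" "p < 1"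
  shows "p \<le> -ln(1-p)" "-ln(1-p) * (1-p) \<le> p"
proof -
  show "p \<le> -ln(1-p)" using ln_le_minus_one[of "1-p"] p by simp
  have "ln (1/(1-p)) \<le> 1/(1-p) - 1" using ln_le_minus_one[of "1/(1-p)"] p by simp
  then have "-ln(1-p) \<le> p/(1-p)" using p by (simp add: ln_div field_simps)
  then show "-ln(1-p) * (1-p) \<le> p" using p by (simp add: field_simps)
qed

definition gg :: "real \<Rightarrow> real" where "gg p = 1/(-ln(1-p)) - 1/p"

lemma gg_bounds:
  fixes p :: real assumes p: "0 < p" "p < 1"
  shows "-1 \<le> gg p" "gg p \<le> 0"
proof -
  define r where "r = -ln(1-p)"
  have r1: "p \<le> r" and r2: "r*(1-p) \<le> p" using r_bounds[OF p] by (auto simp: r_def)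
  have rp: "r > 0" using r1 p by simp
  show "gg p \<le> 0" unfolding gg_def r_def[symmetric] using r1 p rp by (simp add: frac_le)
  have "1/p \<le> 1 + 1/r" using r2 p rp by (simp add: field_simps)
  then show "-1 \<le> gg p" unfolding gg_def r_def[symmetric] by simp
qed

lemma bdd_cont_integrable:
  fixes f :: "real \<Rightarrow> real"
  assumes "continuous_on {a<..<b} f" "\<And>x. x \<in> {a<..<b} \<Longrightarrow> \<bar>f x\<bar> \<le> M"
  shows "f absolutely_integrable_on {a..b}"
proof -
  have m: "f \<in> borel_measurable (lebesgue_on {a<..<b})"
    by (rule continuous_imp_measurable_on_sets_lebesgue[OF assms(1)]) auto
  have s: "{a<..<b} \<in> sets lebesgue" by auto
  have i: "(\<lambda>_. M) integrable_on {a<..<b}"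
    using integrable_const_ivl[of M a b] by (simp add: integrable_on_Icc_iff_Ioo)
  have "f absolutely_integrable_on {a<..<b}"
    by (rule measurable_bounded_by_integrable_imp_absolutely_integrable[OF m s i]) (use assms(2) in auto)
  then show ?thesis by (simp add: absolutely_integrable_on_Icc_iff_Ioo)
qed

lemma gg_absint: "gg absolutely_integrable_on {0..1}"
proof (rule bdd_cont_integrable[where M=1])
  have "continuous_on {0<..<1} (\<lambda>p::real. 1/(-ln(1-p)) - 1/p)"
    by (auto intro!: continuous_intros)
  then show "continuous_on {0<..<1} gg" unfolding gg_def .
  fix p :: real assume "p \<in> {0<..<1}"
  then show "\<bar>gg p\<bar> \<le> 1" using gg_bounds[of p] by auto
qed

lemma poly_int: "((\<lambda>p::real. (1-p)^k) has_integral 1/(real k+1)) {0..1}"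
proof -
  define F :: "real \<Rightarrow> real" where "F = (\<lambda>p. -((1-p)^(Suc k)) / (real k + 1))"
  have "((\<lambda>p::real. (1-p)^k) has_integral (F 1 - F 0)) {0..1}"
  proof (rule fundamental_theorem_of_calculus)
    show "0 \<le> (1::real)" by simp
    fix p :: real assume "p \<in> {0..1}"
    have "((\<lambda>p. (1-p)^(Suc k)) has_real_derivative of_nat (Suc k) * ((0 - 1) * (1-p)^(Suc k - Suc 0))) (at p within {0..1})"
      by (intro DERIV_power DERIV_diff DERIV_const DERIV_ident)
    then have "((\<lambda>p. -((1-p)^(Suc k)) / (real k + 1)) has_real_derivative - (of_nat (Suc k) * ((0 - 1) * (1-p)^(Suc k - Suc 0))) / (real k + 1)) (at p within {0..1})"
      by (intro DERIV_minus DERIV_cdivide)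
    then have "(F has_real_derivative - (of_nat (Suc k) * ((0 - 1) * (1-p)^(Suc k - Suc 0))) / (real k + 1)) (at p within {0..1})"
      unfolding F_def .
    moreover have "- (of_nat (Suc k) * ((0 - 1) * (1-p)^(Suc k - Suc 0))) / (real k + 1) = (1-p)^k"
      by (simp add: field_simps)
    ultimately have "(F has_real_derivative (1-p)^k) (at p within {0..1})" by simp
    then show "(F has_vector_derivative (1-p)^k) (at p within {0..1})"
      unfolding has_real_derivative_iff_has_vector_derivative[symmetric] .
  qed
  then show ?thesis by (simp add: F_def)
qed

lemma harm_sum: "harm n = (\<Sum>k<n. 1/(real k+1))"
proof (induction n)
  case 0 then show ?case by (simp add: harm_def)
next
  case (Suc n) then show ?case by (simp add: harm_Suc field_simps)
qed

lemma harm_int: "((\<lambda>p::real. (1-(1-p)^n)/p) has_integral harm n) {0..1}"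
proof -
  have "((\<lambda>p::real. \<Sum>k<n. (1-p)^k) has_integral (\<Sum>k<n. 1/(real k+1))) {0..1}"
    by (intro has_integral_sum poly_int) auto
  then have h: "((\<lambda>p::real. \<Sum>k<n. (1-p)^k) has_integral harm n) {0..1}"
    by (simp add: harm_sum)
  show ?thesis
  proof (rule has_integral_spike[OF negligible_sing[of 0] _ h])
    fix p :: real assume "p \<in> {0..1} - {0}"
    then have "p \<noteq> 0" by auto
    then show "(1-(1-p)^n)/p = (\<Sum>k<n. (1-p)^k)"
      by (simp add: one_diff_power_eq field_simps)
  qed
qed

lemma gg_int: "(gg has_integral -euler_mascheroni) {0..1}"
proof -
  define f where "f = (\<lambda>n p. (1-(1-p)^n) * gg p)"
  have fi: "(f n has_integral (ln (real n + 1) - harm n)) {0..1}" for n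
  proof -
    have "((\<lambda>p. (1-(1-p)^n)/(-ln(1-p)) - (1-(1-p)^n)/p) has_integral (ln (real n + 1) - harm n)) {0..1}"
      by (intro has_integral_diff frullani harm_int)
    moreover have "(\<lambda>p. (1-(1-p)^n)/(-ln(1-p)) - (1-(1-p)^n)/p) = f n"
      by (simp add: f_def gg_def fun_eq_iff right_diff_distrib)
    ultimately show ?thesis by simp
  qed
  have gi: "gg integrable_on {0..1}" using gg_absint absolutely_integrable_on_def by blast
  have dc: "(\<lambda>n. integral {0..1} (f n)) \<longlonglongrightarrow> integral {0..1} gg"
  proof (rule dominated_convergence(2)[where h = "\<lambda>_. 1"])
    show "f n integrable_on {0..1}" for n using fi by blast
    show "(\<lambda>_. 1::real) integrable_on {0..1::real}" by (rule integrable_const_ivl)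
    fix n and p :: real assume p: "p \<in> {0..1}"
    have gb: "\<bar>gg p\<bar> \<le> 1"
    proof (cases "p = 0 \<or> p = 1")
      case True then show ?thesis by (auto simp: gg_def)
    next
      case False then show ?thesis using p gg_bounds[of p] by auto
    qed
    have "\<bar>1-(1-p)^n\<bar> \<le> 1" using p by (auto simp: power_le_one)
    then show "norm (f n p) \<le> 1" using gb by (simp add: f_def abs_mult mult_le_one)
  next
    fix p :: real assume p: "p \<in> {0..1}"
    show "(\<lambda>n. f n p) \<longlonglongrightarrow> gg p"
    proof (cases "p = 0")
      case True then show ?thesis by (simp add: f_def gg_def)
    next
      case False
      then have "(\<lambda>n. (1-p)^n) \<longlonglongrightarrow> 0" using p by (intro LIMSEQ_realpow_zero) auto
      then have "(\<lambda>n. 1-(1-p)^n) \<longlonglongrightarrow> 1 - 0"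
        by (rule tendsto_diff[OF tendsto_const])
      then have "(\<lambda>n. (1-(1-p)^n) * gg p) \<longlonglongrightarrow> (1 - 0) * gg p"
        by (rule tendsto_mult[OF _ tendsto_const])
      then show ?thesis by (simp add: f_def)
    qed
  qed
  have "(\<lambda>n. ln (real n + 1) - harm n) \<longlonglongrightarrow> 0 - euler_mascheroni"
  proof -
    have a: "(\<lambda>n. ln (real n + 1) - ln (real n)) \<longlonglongrightarrow> 0" by real_asymp
    have "(\<lambda>n. (ln (real n + 1) - ln (real n)) - (harm n - ln (real n))) \<longlonglongrightarrow> 0 - euler_mascheroni"
      by (intro tendsto_diff a euler_mascheroni_LIMSEQ)
    then show ?thesis by simp
  qed
  moreover have "(\<lambda>n. integral {0..1} (f n)) = (\<lambda>n. ln (real n + 1) - harm n)"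
    using fi by (auto intro: integral_unique)
  ultimately have "integral {0..1} gg = - euler_mascheroni"
    using dc LIMSEQ_unique by fastforce
  then show ?thesis using gi by (metis has_integral_integral)
qed

lemma I_est:
  fixes x :: real assumes x: "0 < x" "x < 1"
  shows "\<exists>I. ((\<lambda>p. ln(p/x)/(-ln(1-p))) has_integral I) {x..1} \<and>
             \<bar>I - ((1/2)*(ln(1/x))^2 - euler_mascheroni * ln(1/x))\<bar> \<le> 2"
proof -
  define L where "L = ln (1/x)"
  have L: "L = - ln x" "0 \<le> L" using x by (auto simp: L_def ln_div)
  have Lx: "L * x \<le> 1"
  proof -
    have "ln (1/x) \<le> 1/x - 1" using ln_le_minus_one[of "1/x"] x by simp
    then have "L * x \<le> (1/x - 1) * x" using x by (simp add: L_def mult_right_mono)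
    also have "\<dots> \<le> 1" using x by (simp add: field_simps)
    finally show ?thesis .
  qed
  have h1: "((\<lambda>p. ln(p/x)/p) has_integral (1/2)*L^2) {x..1}"
  proof -
    define F where "F = (\<lambda>p. (ln(p/x))^2/2)"
    have "((\<lambda>p. ln(p/x)/p) has_integral (F 1 - F x)) {x..1}"
    proof (rule fundamental_theorem_of_calculus)
      show "x \<le> 1" using x by simp
      fix p assume p: "p \<in> {x..1}"
      then have pp: "p > 0" using x by auto
      have "(F has_real_derivative (ln(p/x)/p)) (at p within {x..1})"
        unfolding F_def using pp x by (auto intro!: derivative_eq_intros simp: field_simps power2_eq_square)
      then show "(F has_vector_derivative (ln(p/x)/p)) (at p within {x..1})"
        unfolding has_real_derivative_iff_has_vector_derivative[symmetric] .
    qed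
    then show ?thesis using x by (simp add: F_def L_def)
  qed
  have gi: "gg integrable_on {0..1}" using gg_int by blast
  have gi1: "gg integrable_on {x..1}" by (rule integrable_subinterval_real[OF gi]) (use x in auto)
  have gi0: "gg integrable_on {0..x}" by (rule integrable_subinterval_real[OF gi]) (use x in auto)
  have comb: "integral {0..x} gg + integral {x..1} gg = - euler_mascheroni"
  proof -
    have "integral {0..x} gg + integral {x..1} gg = integral {0..1} gg"
      by (rule Henstock_Kurzweil_Integration.integral_combine[OF _ _ gi]) (use x in auto)
    also have "\<dots> = - euler_mascheroni" by (rule integral_unique[OF gg_int])
    finally show ?thesis .
  qed
  have G0: "\<bar>integral {0..x} gg\<bar> \<le> x"
  proof -
    have hb: "(gg has_integral integral {0..x} gg) {0..x}" using gi0 by blast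
    have bd: "norm (gg p) \<le> 1" if "p \<in> {0..x} - {0}" for p
    proof -
      have "0 < p" "p < 1" using x that by auto
      then show "norm (gg p) \<le> 1" using gg_bounds[of p] by auto
    qed
    have "norm (integral {0..x} gg) \<le> 1 * x"
      using has_integral_bound_real[of 1 "{0}", OF _ _ hb bd] x by simp
    then show ?thesis using x by simp
  qed
  have ji: "(\<lambda>p. ln p * gg p) absolutely_integrable_on {x..1}"
  proof (rule bdd_cont_integrable[where M=L])
    have "continuous_on {x<..<1} (\<lambda>p::real. ln p * (1/(-ln(1-p)) - 1/p))"
      using x by (auto intro!: continuous_intros)
    then show "continuous_on {x<..<1} (\<lambda>p. ln p * gg p)" unfolding gg_def .
    fix p assume p: "p \<in> {x<..<1}"
    then have "0 < p" "p < 1" using x by auto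
    then have "\<bar>gg p\<bar> \<le> 1" using gg_bounds[of p] by auto
    moreover have "\<bar>ln p\<bar> \<le> L" using p x \<open>p < 1\<close> L by auto
    ultimately show "\<bar>ln p * gg p\<bar> \<le> L" using L
      by (metis abs_ge_zero abs_mult mult.commute mult_left_le mult_le_one order_trans)
  qed
  then have ji': "(\<lambda>p. ln p * gg p) integrable_on {x..1}" using absolutely_integrable_on_def by blast
  have lnint: "((\<lambda>p. - ln p) has_integral (1 - x + x * ln x)) {x..1}"
  proof -
    define F where "F = (\<lambda>p::real. p - p * ln p)"
    have "((\<lambda>p. - ln p) has_integral (F 1 - F x)) {x..1}"
    proof (rule fundamental_theorem_of_calculus)
      show "x \<le> 1" using x by simp
      fix p assume p: "p \<in> {x..1}"
      then have pp: "p > 0" using x by auto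
      have "(F has_real_derivative (- ln p)) (at p within {x..1})"
        unfolding F_def using pp by (auto intro!: derivative_eq_intros simp: field_simps)
      then show "(F has_vector_derivative (- ln p)) (at p within {x..1})"
        unfolding has_real_derivative_iff_has_vector_derivative[symmetric] .
    qed
    moreover have "F 1 - F x = 1 - x + x * ln x" by (simp add: F_def)
    ultimately show ?thesis by simp
  qed
  have J: "\<bar>integral {x..1} (\<lambda>p. ln p * gg p)\<bar> \<le> 1"
  proof -
    have "norm (integral {x..1} (\<lambda>p. ln p * gg p)) \<le> integral {x..1} (\<lambda>p. - ln p)"
    proof (rule integral_norm_bound_integral[OF ji'])
      show "(\<lambda>p. - ln p) integrable_on {x..1}" using lnint by blast
      fix p assume p: "p \<in> {x..1}"
      then have p0: "0 < p" using x by auto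
      show "norm (ln p * gg p) \<le> - ln p"
      proof (cases "p = 1")
        case True then show ?thesis by simp
      next
        case False
        then have "p < 1" using p by auto
        then have "\<bar>gg p\<bar> \<le> 1" using gg_bounds[of p] p0 by auto
        moreover have "ln p \<le> 0" using p0 \<open>p < 1\<close> by simp
        ultimately have "\<bar>ln p\<bar> * \<bar>gg p\<bar> \<le> \<bar>ln p\<bar> * 1"
          by (intro mult_left_mono) auto
        then show ?thesis using \<open>ln p \<le> 0\<close> by (simp add: abs_mult)
      qed
    qed
    also have "\<dots> = 1 - x + x * ln x" using lnint integral_unique by blast
    also have "\<dots> \<le> 1"
    proof -
      have "ln x \<le> 0" using x by simp
      then have "x * ln x \<le> 0" using x by (simp add: mult_nonneg_nonpos)
      then show ?thesis using x by linarith
    qed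
    finally show ?thesis by simp
  qed
  have hsum: "((\<lambda>p. ln(p/x)/p + L * gg p + ln p * gg p) has_integral
          ((1/2)*L^2 + L * integral {x..1} gg + integral {x..1} (\<lambda>p. ln p * gg p))) {x..1}"
    by (intro has_integral_add h1 has_integral_mult_right integrable_integral gi1 ji')
  have eqf: "ln(p/x)/p + L * gg p + ln p * gg p = ln(p/x)/(-ln(1-p))" if "p \<in> {x..1}" for p
  proof -
    have "p > 0" using that x by auto
    then have "ln (p/x) = ln p + L" using x L by (simp add: ln_div)
    then show ?thesis unfolding gg_def by (simp add: add_divide_distrib right_diff_distrib)
  qed
  have hI: "((\<lambda>p. ln(p/x)/(-ln(1-p))) has_integral
          ((1/2)*L^2 + L * integral {x..1} gg + integral {x..1} (\<lambda>p. ln p * gg p))) {x..1}"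
    by (rule has_integral_eq[OF eqf hsum])
  have "\<bar>((1/2)*L^2 + L * integral {x..1} gg + integral {x..1} (\<lambda>p. ln p * gg p)) - ((1/2)*L^2 - euler_mascheroni * L)\<bar>
        = \<bar>- (L * integral {0..x} gg) + integral {x..1} (\<lambda>p. ln p * gg p)\<bar>"
  proof -
    have e: "integral {x..1} gg = - euler_mascheroni - integral {0..x} gg" using comb by linarith
    show ?thesis unfolding e by (simp add: algebra_simps)
  qed
  also have "\<dots> \<le> L * x + 1"
  proof -
    have "\<bar>L * integral {0..x} gg\<bar> \<le> L * x" 
    proof -
      have "\<bar>L * integral {0..x} gg\<bar> = L * \<bar>integral {0..x} gg\<bar>" using L(2) by (simp add: abs_mult)
      also have "\<dots> \<le> L * x" using G0 L(2) by (rule mult_left_mono)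
      finally show ?thesis .
    qed
    then show ?thesis using J by linarith
  qed
  also have "\<dots> \<le> 2" using Lx by simp
  finally show ?thesis using hI unfolding L_def by blast
qed

lemma geo_le_iff:
  fixes p x :: real assumes p: "0 < p" "p < 1" and x: "0 < x"
  shows "x \<le> p * (1-p)^m \<longleftrightarrow> real m \<le> ln(p/x)/(-ln(1-p))"
proof -
  have r: "-ln(1-p) > 0" using p by simp
  have pos: "p * (1-p)^m > 0" using p by simp
  have "x \<le> p * (1-p)^m \<longleftrightarrow> ln x \<le> ln (p * (1-p)^m)"
    using pos x by simp
  also have "ln (p * (1-p)^m) = ln p + real m * ln (1-p)"
    using p by (simp add: ln_mult ln_realpow)
  also have "ln x \<le> ln p + real m * ln (1-p) \<longleftrightarrow> real m * (-ln(1-p)) \<le> ln(p/x)"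
    using p x by (auto simp: ln_div algebra_simps)
  also have "\<dots> \<longleftrightarrow> real m \<le> ln(p/x)/(-ln(1-p))"
    by (rule pos_le_divide_eq[OF r, symmetric])
  finally show ?thesis .
qed

lemma card_formula:
  fixes p x :: real assumes p: "0 < p" "p < 1" and x: "0 < x"
  shows "real (card {j::nat. 1 \<le> j \<and> p * (1 - p) ^ (j - 1) \<ge> x}) =
         (if x \<le> p then of_int \<lfloor>ln(p/x)/(-ln(1-p))\<rfloor> + 1 else 0)"
proof (cases "x \<le> p")
  case True
  define M where "M = \<lfloor>ln(p/x)/(-ln(1-p))\<rfloor>"
  have r: "-ln(1-p) > 0" using p by simp
  have "ln (p/x) \<ge> 0" using True x by simp
  then have "0 \<le> ln(p/x)/(-ln(1-p))" by (rule divide_nonneg_nonneg) (use r in linarith)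
  then have M0: "M \<ge> 0" unfolding M_def by simp
  have "{j::nat. 1 \<le> j \<and> p * (1 - p) ^ (j - 1) \<ge> x} = {1..nat M + 1}"
  proof (intro set_eqI iffI)
    fix j assume "j \<in> {j::nat. 1 \<le> j \<and> p * (1 - p) ^ (j - 1) \<ge> x}"
    then have j: "1 \<le> j" "real (j-1) \<le> ln(p/x)/(-ln(1-p))" using geo_le_iff[OF p x] by auto
    then have "int (j-1) \<le> M" unfolding M_def by (simp add: le_floor_iff)
    then show "j \<in> {1..nat M + 1}" using j M0 by auto
  next
    fix j assume j: "j \<in> {1..nat M + 1}"
    then have "int (j-1) \<le> M" using M0 by auto
    then have "real (j-1) \<le> ln(p/x)/(-ln(1-p))" unfolding M_def by (simp add: le_floor_iff)
    then show "j \<in> {j::nat. 1 \<le> j \<and> p * (1 - p) ^ (j - 1) \<ge> x}" using j geo_le_iff[OF p x] by auto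
  qed
  then show ?thesis using True M0 unfolding M_def[symmetric] by simp
next
  case False
  have le: "p * (1-p)^(j-1) \<le> p" for j :: nat
    using p by (simp add: mult_left_le power_le_one)
  have E: "{j::nat. 1 \<le> j \<and> p * (1 - p) ^ (j - 1) \<ge> x} = {}"
  proof -
    { fix j::nat assume "x \<le> p*(1-p)^(j-1)" then have False using le[of j] False by linarith }
    then show ?thesis by blast
  qed
  have "card {j::nat. 1 \<le> j \<and> p * (1 - p) ^ (j - 1) \<ge> x} = 0" by (simp only: E card.empty)
  then show ?thesis using False by simp
qed

lemma nu_est:
  fixes x :: real assumes x: "0 < x" "x < 1"
  shows "\<bar>nu x - ((1/2)*(ln(1/x))^2 - euler_mascheroni * ln(1/x))\<bar> \<le> 3"
proof -
  obtain I where hI: "((\<lambda>p. ln(p/x)/(-ln(1-p))) has_integral I) {x..1}"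
    and Ib: "\<bar>I - ((1/2)*(ln(1/x))^2 - euler_mascheroni * ln(1/x))\<bar> \<le> 2"
    using I_est[OF x] by blast
  define B where "B = (\<lambda>p. if x < p then ln(p/x)/(-ln(1-p)) else 0)"
  define c where "c = (\<lambda>p. if x \<le> p then of_int \<lfloor>ln(p/x)/(-ln(1-p))\<rfloor> + 1 else (0::real))"
  define K where "K = ln(1/x)/x"
  have K0: "0 \<le> K" using x by (simp add: K_def)
  have Bb: "0 \<le> B p \<and> B p \<le> K" if p: "0 < p" "p < 1" for p
  proof (cases "x < p")
    case True
    have r1: "p \<le> -ln(1-p)" using r_bounds[OF p] by simp
    have l0: "0 \<le> ln (p/x)" using True x by simp
    have rp: "0 < -ln(1-p)" using p by simp
    have "ln(p/x)/(-ln(1-p)) \<le> ln(p/x)/p" by (rule divide_left_mono[OF r1 l0 mult_pos_pos[OF rp p(1)]])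
    also have "\<dots> \<le> ln(1/x)/p" using p x by (intro divide_right_mono) (auto simp: divide_right_mono)
    also have "\<dots> \<le> ln(1/x)/x" using True x by (intro divide_left_mono) auto
    finally have "ln(p/x)/(-ln(1-p)) \<le> K" unfolding K_def .
    moreover have "0 \<le> ln(p/x)/(-ln(1-p))" by (rule divide_nonneg_nonneg[OF l0]) (use rp in linarith)
    ultimately show ?thesis using True unfolding B_def by simp
  qed (auto simp: B_def K0)
  have cB: "B p \<le> c p \<and> c p \<le> B p + 1" if p: "0 < p" "p < 1" for p
  proof (cases "x < p")
    case True
    then show ?thesis unfolding B_def c_def
      using real_of_int_floor_add_one_gt[of "ln(p/x)/(-ln(1-p))"] of_int_floor_le[of "ln(p/x)/(-ln(1-p))"] by auto
  next
    case False
    then show ?thesis unfolding B_def c_def by auto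
  qed
  have Bm: "B \<in> borel_measurable borel" unfolding B_def by measurable
  have cm: "c \<in> borel_measurable borel" unfolding c_def by measurable
  have Kint: "set_integrable lborel {0<..<1} (\<lambda>_::real. K + 1)"
  proof -
    have "set_integrable lborel {0..1} (\<lambda>_::real. K+1)"
      by (rule borel_integrable_atLeastAtMost') (rule continuous_on_const)
    moreover have "{0<..<1::real} \<in> sets lborel" by simp
    moreover have "{0<..<1::real} \<subseteq> {0..1}" by auto
    ultimately show ?thesis by (rule set_integrable_subset)
  qed
  have Bi: "set_integrable lborel {0<..<1} B"
  proof (rule set_integrable_bound[OF Kint])
    show "set_borel_measurable lborel {0<..<1} B" using Bm by (auto simp: set_borel_measurable_def)
    show "AE p in lborel. p \<in> {0<..<1} \<longrightarrow> norm (B p) \<le> norm (K + 1)"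
    proof (intro AE_I2 impI)
      fix p :: real assume "p \<in> {0<..<1}"
      then have "0 \<le> B p" "B p \<le> K" using Bb[of p] by auto
      then show "norm (B p) \<le> norm (K + 1)" using K0 by auto
    qed
  qed
  have ci: "set_integrable lborel {0<..<1} c"
  proof (rule set_integrable_bound[OF Kint])
    show "set_borel_measurable lborel {0<..<1} c" using cm by (auto simp: set_borel_measurable_def)
    show "AE p in lborel. p \<in> {0<..<1} \<longrightarrow> norm (c p) \<le> norm (K + 1)"
    proof (intro AE_I2 impI)
      fix p :: real assume "p \<in> {0<..<1}"
      then have "0 \<le> B p" "B p \<le> K" "B p \<le> c p" "c p \<le> B p + 1" using Bb[of p] cB[of p] by auto
      then show "norm (c p) \<le> norm (K + 1)" using K0 by auto
    qed
  qed
  have oneint: "set_integrable lborel {0<..<1} (\<lambda>_::real. 1::real)"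
  proof -
    have "set_integrable lborel {0..1} (\<lambda>_::real. 1::real)"
      by (rule borel_integrable_atLeastAtMost') (rule continuous_on_const)
    moreover have "{0<..<1::real} \<in> sets lborel" by simp
    moreover have "{0<..<1::real} \<subseteq> {0..1}" by auto
    ultimately show ?thesis by (rule set_integrable_subset)
  qed
  have LB: "(LBINT p:{0<..<1}. B p) = I"
  proof -
    have "(LBINT p:{0<..<1}. B p) = integral {0<..<1} B" by (rule set_borel_integral_eq_integral(2)[OF Bi])
    moreover have "(B has_integral I) {0<..<1}"
    proof -
      have "((\<lambda>p. ln(p/x)/(-ln(1-p))) has_integral I) {x<..<1}" using hI by (simp add: has_integral_Icc_iff_Ioo)
      then have "((\<lambda>p. if p \<in> {x<..<1} then ln(p/x)/(-ln(1-p)) else 0) has_integral I) {0<..<1}"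
        using x by (subst has_integral_restrict) auto
      then show ?thesis by (rule has_integral_eq[rotated]) (auto simp: B_def)
    qed
    ultimately show ?thesis by (simp add: integral_unique)
  qed
  have nuc: "nu x = (LBINT p:{0<..<1}. c p)"
    unfolding nu_def using card_formula[of _ x] x
    by (intro set_lebesgue_integral_cong) (auto simp: c_def)
  have lo: "(LBINT p:{0<..<1}. B p) \<le> (LBINT p:{0<..<1}. c p)"
    by (rule set_integral_mono[OF Bi ci]) (use cB in auto)
  have "(LBINT p:{0<..<1}. c p) \<le> (LBINT p:{0<..<1}. B p + 1)"
    by (rule set_integral_mono[OF ci set_integral_add(1)[OF Bi oneint]]) (use cB in auto)
  also have "\<dots> = (LBINT p:{0<..<1}. B p) + (LBINT p:{0<..<1::real}. (1::real))"
    by (rule set_integral_add(2)[OF Bi oneint])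
  also have "(LBINT p:{0<..<1::real}. (1::real)) = 1"
    by (subst set_integral_const) auto
  finally have hi: "(LBINT p:{0<..<1}. c p) \<le> I + 1" using LB by simp
  have "\<bar>nu x - I\<bar> \<le> 1" using lo hi LB nuc by linarith
  then show ?thesis using Ib by linarith
qed

lemma pmf_geom1_Suc:
  assumes "0 < p" "p < 1"
  shows "pmf (geom1_pmf p) (Suc j) = p * (1-p)^j"
  unfolding geom1_pmf_def using assms by (subst pmf_map_inj') (auto simp: inj_def)

lemma pmf_geom1_0: "pmf (geom1_pmf p) 0 = 0"
  unfolding geom1_pmf_def by (rule pmf_map_outside) auto

lemma prob_hit:
  "measure_pmf.prob (sample_pmf p n) {X. j \<in> X ` {..<n}} = 1 - (1 - pmf (geom1_pmf p) j)^n"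
proof -
  have e: "{X. j \<in> X ` {..<n}} = UNIV - Pi {..<n} (\<lambda>_. - {j})" by auto
  have "measure_pmf.prob (sample_pmf p n) (Pi {..<n} (\<lambda>_. - {j})) = (\<Prod>i\<in>{..<n}. measure_pmf.prob (geom1_pmf p) (- {j}))"
    unfolding sample_pmf_def by (rule measure_Pi_pmf_Pi) simp
  also have "measure_pmf.prob (geom1_pmf p) (- {j}) = 1 - pmf (geom1_pmf p) j"
    using measure_pmf.prob_compl[of "{j}" "geom1_pmf p"] by (simp add: measure_pmf_single Compl_eq_Diff_UNIV)
  finally have "measure_pmf.prob (sample_pmf p n) (Pi {..<n} (\<lambda>_. - {j})) = (1 - pmf (geom1_pmf p) j)^n" by simp
  then show ?thesis unfolding e using measure_pmf.prob_compl[of "Pi {..<n} (\<lambda>_. - {j})" "sample_pmf p n"] by simp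
qed

lemma card_suminf:
  assumes "finite S"
  shows "(\<Sum>j. ennreal (indicator S j)) = ennreal (real (card S))"
proof -
  have "(\<Sum>j. ennreal (indicator S j)) = (\<Sum>j\<in>S. ennreal (indicator S j))"
    by (rule suminf_finite[OF assms]) auto
  also have "\<dots> = (\<Sum>j\<in>S. 1)" by simp
  also have "\<dots> = ennreal (real (card S))" by (simp add: ennreal_of_nat_eq_real_of_nat)
  finally show ?thesis .
qed

lemma E_formula:
  assumes p: "0 < p" "p < 1"
  shows "summable (\<lambda>j. 1 - (1 - p*(1-p)^j)^n)"
    "measure_pmf.expectation (sample_pmf p n) (\<lambda>X. real (K n X)) = (\<Sum>j. 1 - (1 - p*(1-p)^j)^n)"
proof -
  define a where "a = (\<lambda>j. 1 - (1 - pmf (geom1_pmf p) j)^n)"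
  have a0: "a 0 = 0" by (simp add: a_def pmf_geom1_0)
  have aS: "a (Suc j) = 1 - (1 - p*(1-p)^j)^n" for j by (simp add: a_def pmf_geom1_Suc[OF p])
  have anonneg: "0 \<le> a j" for j
    unfolding a_def by (simp add: power_le_one pmf_le_1)
  have abound: "1 - (1 - q)^n \<le> real n * q" if "0 \<le> q" "q \<le> 1" for q :: real
    using Bernoulli_inequality[of "-q" n] that by simp
  have sumS: "summable (\<lambda>j. 1 - (1 - p*(1-p)^j)^n)"
  proof (rule summable_comparison_test)
    show "summable (\<lambda>j. real n * p * (1-p)^j)"
      using p by (intro summable_mult summable_geometric) auto
    show "\<exists>N. \<forall>j\<ge>N. norm (1 - (1 - p*(1-p)^j)^n) \<le> real n * p * (1-p)^j"
    proof (intro exI allI impI)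
      fix j :: nat
      have q: "0 \<le> p*(1-p)^j" "p*(1-p)^j \<le> 1" using p by (auto simp: mult_le_one power_le_one)
      have "0 \<le> 1 - (1 - p*(1-p)^j)^n" using q by (simp add: power_le_one)
      then show "norm (1 - (1 - p*(1-p)^j)^n) \<le> real n * p * (1-p)^j"
        using abound[OF q] by simp
    qed
  qed
  then show "summable (\<lambda>j. 1 - (1 - p*(1-p)^j)^n)" .
  have suma: "summable a"
  proof -
    have "summable (\<lambda>j. a (Suc j))" using sumS by (simp only: aS)
    then show ?thesis by (simp only: summable_Suc_iff)
  qed
  have "(\<integral>\<^sup>+X. ennreal (real (K n X)) \<partial>sample_pmf p n) =
        (\<integral>\<^sup>+X. (\<Sum>j. ennreal (indicator {X. j \<in> X ` {..<n}} X)) \<partial>sample_pmf p n)"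
  proof (intro nn_integral_cong)
    fix X :: "nat \<Rightarrow> nat"
    have "ennreal (real (K n X)) = (\<Sum>j. ennreal (indicator (X`{..<n}) j))"
      unfolding K_def by (rule card_suminf[symmetric]) simp
    also have "\<dots> = (\<Sum>j. ennreal (indicator {X. j \<in> X ` {..<n}} X))"
      by (intro suminf_cong) (simp only: indicator_def mem_Collect_eq)
    finally show "ennreal (real (K n X)) = (\<Sum>j. ennreal (indicator {X. j \<in> X ` {..<n}} X))" .
  qed
  also have "\<dots> = (\<Sum>j. \<integral>\<^sup>+X. ennreal (indicator {X. j \<in> X ` {..<n}} X) \<partial>sample_pmf p n)"
    by (rule nn_integral_suminf) simp
  also have "\<dots> = (\<Sum>j. ennreal (a j))"
  proof (intro suminf_cong)
    fix j
    have "(\<integral>\<^sup>+X. ennreal (indicator {X. j \<in> X ` {..<n}} X) \<partial>sample_pmf p n) =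
          emeasure (sample_pmf p n) {X. j \<in> X ` {..<n}}"
      by (simp add: ennreal_indicator nn_integral_indicator)
    also have "\<dots> = ennreal (a j)"
      by (simp add: measure_pmf.emeasure_eq_measure prob_hit a_def)
    finally show "(\<integral>\<^sup>+X. ennreal (indicator {X. j \<in> X ` {..<n}} X) \<partial>sample_pmf p n) = ennreal (a j)" .
  qed
  also have "\<dots> = ennreal (\<Sum>j. a j)" by (rule suminf_ennreal2[OF anonneg suma])
  finally have nn: "(\<integral>\<^sup>+X. ennreal (real (K n X)) \<partial>sample_pmf p n) = ennreal (\<Sum>j. a j)" .
  have "measure_pmf.expectation (sample_pmf p n) (\<lambda>X. real (K n X)) =
        enn2real (\<integral>\<^sup>+X. ennreal (real (K n X)) \<partial>sample_pmf p n)"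
    by (rule integral_eq_nn_integral) auto
  also have "\<dots> = (\<Sum>j. a j)" using nn suminf_nonneg[OF suma anonneg] by simp
  also have "\<dots> = (\<Sum>j. a (Suc j))" using suminf_split_head[OF suma] a0 by simp
  finally show "measure_pmf.expectation (sample_pmf p n) (\<lambda>X. real (K n X)) = (\<Sum>j. 1 - (1 - p*(1-p)^j)^n)"
    by (simp add: aS)
qed

definition Fn :: "nat \<Rightarrow> real \<Rightarrow> real" where
  "Fn n y = (\<Sum>k<n. (1 - (1-y)^(Suc k)) / real (Suc k))"

lemma geo_id: "y * (\<Sum>k<n. (1-y)^k) = 1 - (1-y)^n" for y :: real
  using one_diff_power_eq[of "1-y" n] by simp

lemma Fn_deriv: "((\<lambda>t. Fn n (exp t)) has_real_derivative (1 - (1 - exp t)^n)) (at t)"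
proof -
  have d: "((\<lambda>t. (1 - (1-exp t)^(Suc k)) / real (Suc k)) has_real_derivative exp t * (1 - exp t)^k) (at t)" for k
  proof -
    have "((\<lambda>t. (1-exp t)^(Suc k)) has_real_derivative of_nat (Suc k) * ((0 - exp t) * (1-exp t)^(Suc k - Suc 0))) (at t)"
      by (intro DERIV_power DERIV_diff DERIV_const DERIV_exp)
    then have "((\<lambda>t. (1 - (1-exp t)^(Suc k)) / real (Suc k)) has_real_derivative
        (0 - of_nat (Suc k) * ((0 - exp t) * (1-exp t)^(Suc k - Suc 0))) / real (Suc k)) (at t)"
      by (intro DERIV_cdivide DERIV_diff DERIV_const)
    moreover have "(0 - of_nat (Suc k) * ((0 - exp t) * (1-exp t)^(Suc k - Suc 0))) / real (Suc k) = exp t * (1 - exp t)^k"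
      by (simp add: field_simps)
    ultimately show ?thesis by simp
  qed
  have "((\<lambda>t. \<Sum>k<n. (1 - (1-exp t)^(Suc k)) / real (Suc k)) has_real_derivative (\<Sum>k<n. exp t * (1 - exp t)^k)) (at t)"
    by (rule DERIV_sum) (rule d)
  moreover have "(\<Sum>k<n. exp t * (1 - exp t)^k) = 1 - (1 - exp t)^n"
    using geo_id[of "exp t" n] by (simp add: sum_distrib_left)
  ultimately show ?thesis unfolding Fn_def by simp
qed

lemma hh_mono: "0 \<le> u \<Longrightarrow> u \<le> v \<Longrightarrow> v \<le> 1 \<Longrightarrow> 1 - (1-u)^n \<le> 1 - (1-(v::real))^n"
  by (simp add: power_mono)

lemma Fn_step:
  fixes j n :: nat and p :: real
  assumes p: "0 < p" "p < 1"
  defines "y \<equiv> p * (1-p)^j" and "y' \<equiv> p * (1-p)^(Suc j)"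
  shows "(-ln(1-p)) * (1 - (1-y')^n) \<le> Fn n y - Fn n y'"
        "Fn n y - Fn n y' \<le> (-ln(1-p)) * (1 - (1-y)^n)"
proof -
  have y0: "0 < y" "y \<le> 1" unfolding y_def using p by (auto simp: mult_le_one power_le_one)
  have yy: "y' = y * (1-p)" unfolding y_def y'_def by simp
  have y'0: "0 < y'" using y0 p yy by simp
  have lnd: "ln y - ln y' = -ln(1-p)" using yy y0 p by (simp add: ln_mult)
  have l1: "ln (1-p) < 0" using p by simp
  have ab: "ln y' < ln y" using lnd l1 by linarith
  obtain z where z: "ln y' < z" "z < ln y"
    and eq: "Fn n (exp (ln y)) - Fn n (exp (ln y')) = (ln y - ln y') * (1 - (1 - exp z)^n)"
    using MVT2[OF ab, of "\<lambda>t. Fn n (exp t)" "\<lambda>t. 1 - (1 - exp t)^n"] Fn_deriv by blast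
  have ez: "y' \<le> exp z" "exp z \<le> y"
  proof -
    have "exp (ln y') < exp z" "exp z < exp (ln y)" using z by simp_all
    then show "y' \<le> exp z" "exp z \<le> y" using y0 y'0 by simp_all
  qed
  have eq': "Fn n y - Fn n y' = (-ln(1-p)) * (1 - (1 - exp z)^n)"
    using eq y0 y'0 lnd by simp
  have r: "0 \<le> -ln(1-p)" using p by simp
  have "exp z \<le> 1" using ez y0 by linarith
  then have z0: "z \<le> 0" by simp
  show "(-ln(1-p)) * (1 - (1-y')^n) \<le> Fn n y - Fn n y'"
    unfolding eq' using hh_mono[of y' "exp z" n] ez y0 y'0 r z0 by (intro mult_left_mono) auto
  show "Fn n y - Fn n y' \<le> (-ln(1-p)) * (1 - (1-y)^n)"
    unfolding eq' using hh_mono[of "exp z" y n] ez y0 r z0 by (intro mult_left_mono) auto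
qed

lemma Fn_nonneg: "0 \<le> y \<Longrightarrow> y \<le> 1 \<Longrightarrow> 0 \<le> Fn n y"
  unfolding Fn_def by (intro sum_nonneg divide_nonneg_nonneg) (auto simp: power_le_one simp del: power_Suc)

lemma Fn_0: "Fn n 0 = 0" by (simp add: Fn_def)

lemma Fn_cont: "isCont (Fn n) y"
  unfolding Fn_def by (intro continuous_intros) auto

lemma sandwich:
  assumes p: "0 < p" "p < 1"
  shows "Fn n p / (-ln(1-p)) \<le> (\<Sum>j. 1 - (1 - p*(1-p)^j)^n)"
        "(\<Sum>j. 1 - (1 - p*(1-p)^j)^n) \<le> Fn n p / (-ln(1-p)) + 1"
proof -
  define r where "r = -ln(1-p)"
  define a where "a = (\<lambda>j. 1 - (1 - p*(1-p)^j)^n)"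
  define Y where "Y = (\<lambda>j. p*(1-p)^j)"
  have r0: "0 < r" using p by (simp add: r_def)
  have summ: "summable a" unfolding a_def by (rule E_formula(1)[OF p])
  have Y01: "0 \<le> Y j" "Y j \<le> 1" for j using p by (auto simp: Y_def mult_le_one power_le_one)
  have tele: "(\<Sum>j<N. Fn n (Y j) - Fn n (Y (Suc j))) = Fn n p - Fn n (Y N)" for N
    by (subst sum_lessThan_telescope') (simp add: Y_def)
  have lowN: "Fn n p - Fn n (Y N) \<le> r * (\<Sum>j<N. a j)" for N
  proof -
    have "(\<Sum>j<N. Fn n (Y j) - Fn n (Y (Suc j))) \<le> (\<Sum>j<N. r * a j)"
      by (intro sum_mono) (use Fn_step(2)[OF p] in \<open>simp add: Y_def a_def r_def\<close>)
    then show ?thesis by (simp add: tele sum_distrib_left)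
  qed
  have upN: "r * (\<Sum>j<N. a (Suc j)) \<le> Fn n p" for N
  proof -
    have "(\<Sum>j<N. r * a (Suc j)) \<le> (\<Sum>j<N. Fn n (Y j) - Fn n (Y (Suc j)))"
      by (intro sum_mono) (use Fn_step(1)[OF p] in \<open>simp add: Y_def a_def r_def\<close>)
    also have "\<dots> \<le> Fn n p" unfolding tele using Fn_nonneg[OF Y01] by simp
    finally show ?thesis by (simp add: sum_distrib_left)
  qed
  have YN: "Y \<longlonglongrightarrow> 0"
  proof -
    have "(\<lambda>j. p*(1-p)^j) \<longlonglongrightarrow> p * 0"
      using p by (intro tendsto_mult tendsto_const LIMSEQ_realpow_zero) auto
    then show ?thesis by (simp add: Y_def)
  qed
  have "(\<lambda>N. Fn n p - Fn n (Y N)) \<longlonglongrightarrow> Fn n p - Fn n 0"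
    by (intro tendsto_diff tendsto_const isCont_tendsto_compose[OF Fn_cont YN])
  then have l1: "(\<lambda>N. Fn n p - Fn n (Y N)) \<longlonglongrightarrow> Fn n p" by (simp add: Fn_0)
  have l2: "(\<lambda>N. r * (\<Sum>j<N. a j)) \<longlonglongrightarrow> r * suminf a"
    by (intro tendsto_mult tendsto_const summable_LIMSEQ summ)
  have "Fn n p \<le> r * suminf a" by (rule LIMSEQ_le[OF l1 l2]) (use lowN in auto)
  then show "Fn n p / (-ln(1-p)) \<le> (\<Sum>j. 1 - (1 - p*(1-p)^j)^n)"
    using r0 unfolding r_def[symmetric] a_def[symmetric] by (simp add: pos_divide_le_eq mult.commute)
  have summ': "summable (\<lambda>j. a (Suc j))" using summ by (simp only: summable_Suc_iff)
  have "(\<Sum>j. a (Suc j)) \<le> Fn n p / r"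
    by (rule suminf_le_const[OF summ']) (use upN r0 in \<open>simp add: pos_le_divide_eq mult.commute\<close>)
  moreover have "(\<Sum>j. a (Suc j)) = suminf a - a 0" by (rule suminf_split_head[OF summ])
  moreover have "a 0 \<le> 1" using p by (simp add: a_def)
  ultimately have "suminf a \<le> Fn n p / r + 1" by linarith
  then show "(\<Sum>j. 1 - (1 - p*(1-p)^j)^n) \<le> Fn n p / (-ln(1-p)) + 1"
    unfolding r_def a_def .
qed

lemma Fn_le: assumes p: "0 < p" "p < 1" shows "Fn n p \<le> real n * p"
proof -
  have "(1 - (1-p)^(Suc k)) / real (Suc k) \<le> p" for k
  proof -
    have "1 + real (Suc k) * (-p) \<le> (1 + (-p))^(Suc k)" using p by (intro Bernoulli_inequality) auto
    then have "1 - (1-p)^(Suc k) \<le> p * real (Suc k)" by (simp add: algebra_simps)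
    then show ?thesis by (simp add: divide_le_eq)
  qed
  then have "Fn n p \<le> real (card {..<n}) * p" unfolding Fn_def by (intro sum_bounded_above) auto
  then show ?thesis by simp
qed

definition SS :: "nat \<Rightarrow> real" where
  "SS n = (\<Sum>k<n. ln (real (Suc k) + 1) / real (Suc k))"

lemma Phi_int: "((\<lambda>p. Fn n p / (-ln(1-p))) has_integral SS n) {0..1}"
proof -
  have "((\<lambda>p. \<Sum>k<n. (1 / real (Suc k)) * ((1-(1-p)^(Suc k))/(-ln(1-p)))) has_integral
         (\<Sum>k<n. (1 / real (Suc k)) * ln (real (Suc k) + 1))) {0..1}"
    by (intro has_integral_sum has_integral_mult_right frullani) auto
  moreover have "(\<lambda>p. \<Sum>k<n. (1 / real (Suc k)) * ((1-(1-p)^(Suc k))/(-ln(1-p)))) = (\<lambda>p. Fn n p / (-ln(1-p)))"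
    by (auto simp: Fn_def sum_divide_distrib fun_eq_iff sum_negf)
  moreover have "(\<Sum>k<n. (1 / real (Suc k)) * ln (real (Suc k) + 1)) = SS n"
    by (simp add: SS_def)
  ultimately show ?thesis by simp
qed

lemma EK_est: "SS n \<le> EK n \<and> EK n \<le> SS n + 1"
proof -
  define D :: "real \<Rightarrow> real" where "D = (\<lambda>p. indicator {0<..<1} p * (\<Sum>j. 1 - (1 - p*(1-p)^j)^n))"
  define Phi :: "real \<Rightarrow> real" where "Phi = (\<lambda>p. Fn n p / (-ln(1-p)))"
  have Phib: "0 \<le> Phi p \<and> Phi p \<le> real n" if p: "0 < p" "p < 1" for p
  proof -
    have r: "p \<le> -ln(1-p)" using r_bounds[OF p] by simp
    have "Fn n p \<le> real n * p" by (rule Fn_le[OF p])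
    also have "\<dots> \<le> real n * (-ln(1-p))" using r by (intro mult_left_mono) auto
    finally have c: "Fn n p \<le> real n * (-ln(1-p))" .
    have rpos: "0 < -ln(1-p)" using p by simp
    have "Fn n p / (-ln(1-p)) \<le> real n" by (subst pos_divide_le_eq[OF rpos]) (rule c)
    moreover have "0 \<le> Fn n p" using p by (intro Fn_nonneg) auto
    then have "0 \<le> Fn n p / (-ln(1-p))" by (rule divide_nonneg_nonneg) (use rpos in linarith)
    ultimately show ?thesis unfolding Phi_def by simp
  qed
  have DPhi: "Phi p \<le> D p \<and> D p \<le> Phi p + 1" if p: "0 < p" "p < 1" for p
    using sandwich[OF p, of n] p unfolding Phi_def D_def by simp
  have Dm: "D \<in> borel_measurable borel"
  proof (rule borel_measurable_LIMSEQ_real)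
    show "(\<lambda>p::real. indicator {0<..<1} p * (\<Sum>j<N. 1 - (1 - p*(1-p)^j)^n)) \<in> borel_measurable borel" for N
      by measurable
    fix p :: real
    show "(\<lambda>N. indicator {0<..<1} p * (\<Sum>j<N. 1 - (1 - p*(1-p)^j)^n)) \<longlonglongrightarrow> D p"
    proof (cases "p \<in> {0<..<1}")
      case True
      then have "summable (\<lambda>j. 1 - (1 - p*(1-p)^j)^n)" by (intro E_formula(1)) auto
      then show ?thesis unfolding D_def by (intro tendsto_mult tendsto_const summable_LIMSEQ)
    next
      case False then show ?thesis by (simp add: D_def)
    qed
  qed
  have Phim: "Phi \<in> borel_measurable borel" unfolding Phi_def Fn_def by measurable
  have Kint: "set_integrable lborel {0<..<1} (\<lambda>_::real. real n + 1)"
  proof -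
    have "set_integrable lborel {0..1} (\<lambda>_::real. real n + 1)"
      by (rule borel_integrable_atLeastAtMost') (rule continuous_on_const)
    moreover have "{0<..<1::real} \<in> sets lborel" by simp
    moreover have "{0<..<1::real} \<subseteq> {0..1}" by auto
    ultimately show ?thesis by (rule set_integrable_subset)
  qed
  have oneint: "set_integrable lborel {0<..<1} (\<lambda>_::real. 1::real)"
  proof -
    have "set_integrable lborel {0..1} (\<lambda>_::real. 1::real)"
      by (rule borel_integrable_atLeastAtMost') (rule continuous_on_const)
    moreover have "{0<..<1::real} \<in> sets lborel" by simp
    moreover have "{0<..<1::real} \<subseteq> {0..1}" by auto
    ultimately show ?thesis by (rule set_integrable_subset)
  qed
  have Phii: "set_integrable lborel {0<..<1} Phi"
  proof (rule set_integrable_bound[OF Kint])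
    show "set_borel_measurable lborel {0<..<1} Phi" using Phim by (auto simp: set_borel_measurable_def)
    show "AE p in lborel. p \<in> {0<..<1} \<longrightarrow> norm (Phi p) \<le> norm (real n + 1)"
    proof (intro AE_I2 impI)
      fix p :: real assume "p \<in> {0<..<1}"
      then have "0 \<le> Phi p" "Phi p \<le> real n" using Phib[of p] by auto
      then show "norm (Phi p) \<le> norm (real n + 1)" by auto
    qed
  qed
  have Di: "set_integrable lborel {0<..<1} D"
  proof (rule set_integrable_bound[OF Kint])
    show "set_borel_measurable lborel {0<..<1} D" using Dm by (auto simp: set_borel_measurable_def)
    show "AE p in lborel. p \<in> {0<..<1} \<longrightarrow> norm (D p) \<le> norm (real n + 1)"
    proof (intro AE_I2 impI)
      fix p :: real assume "p \<in> {0<..<1}"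
      then have "0 \<le> Phi p" "Phi p \<le> real n" "Phi p \<le> D p" "D p \<le> Phi p + 1" using Phib[of p] DPhi[of p] by auto
      then show "norm (D p) \<le> norm (real n + 1)" by auto
    qed
  qed
  have LPhi: "(LBINT p:{0<..<1}. Phi p) = SS n"
  proof -
    have "(LBINT p:{0<..<1}. Phi p) = integral {0<..<1} Phi" by (rule set_borel_integral_eq_integral(2)[OF Phii])
    moreover have "(Phi has_integral SS n) {0<..<1}" using Phi_int[of n] unfolding Phi_def by (simp add: has_integral_Icc_iff_Ioo)
    ultimately show ?thesis by (simp add: integral_unique)
  qed
  have EKD: "EK n = (LBINT p:{0<..<1}. D p)"
    unfolding EK_def using E_formula(2)
    by (intro set_lebesgue_integral_cong) (auto simp: D_def)
  have lo: "(LBINT p:{0<..<1}. Phi p) \<le> (LBINT p:{0<..<1}. D p)"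
    by (rule set_integral_mono[OF Phii Di]) (use DPhi in auto)
  have "(LBINT p:{0<..<1}. D p) \<le> (LBINT p:{0<..<1}. Phi p + 1)"
    by (rule set_integral_mono[OF Di set_integral_add(1)[OF Phii oneint]]) (use DPhi in auto)
  also have "\<dots> = (LBINT p:{0<..<1}. Phi p) + (LBINT p:{0<..<1::real}. (1::real))"
    by (rule set_integral_add(2)[OF Phii oneint])
  also have "(LBINT p:{0<..<1::real}. (1::real)) = 1"
    by (subst set_integral_const) auto
  finally show ?thesis using lo LPhi EKD by simp
qed

definition dd :: "nat \<Rightarrow> real" where
  "dd k = ln (real k + 2)/(real k + 1) - ((ln (real k + 1))^2 - (ln (real k))^2)/2"

lemma ln_step:
  fixes x :: real assumes x: "0 < x"
  shows "1/(x+1) \<le> ln (x+1) - ln x" "ln (x+1) - ln x \<le> 1/x"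
proof -
  have "ln (1 + 1/x) = ln ((x+1)/x)" using x by (simp add: field_simps)
  also have "\<dots> = ln (x+1) - ln x" using x by (simp add: ln_div)
  finally have "ln (x+1) - ln x = ln (1 + 1/x)" by simp
  also have "\<dots> \<le> 1/x" using x by (intro ln_add_one_self_le_self) auto
  finally show "ln (x+1) - ln x \<le> 1/x" .
  have "ln (x/(x+1)) \<le> x/(x+1) - 1" using x by (intro ln_le_minus_one) auto
  also have "x/(x+1) - 1 = - (1/(x+1))" using x by (simp add: field_simps)
  finally show "1/(x+1) \<le> ln (x+1) - ln x" using x by (simp add: ln_div)
qed

lemma dd_bound:
  assumes k: "k \<ge> 1"
  shows "\<bar>dd k\<bar> \<le> (ln (real k + 1) + 2) / (real k)^2"
proof -
  define x where "x = real k"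
  have x1: "x \<ge> 1" using k by (simp add: x_def)
  define a where "a = ln (x+1) - ln x"
  define b where "b = ln (x+2) - ln (x+1)"
  have a1: "1/(x+1) \<le> a" "a \<le> 1/x" using ln_step[of x] x1 by (auto simp: a_def)
  have b1: "0 \<le> b" "b \<le> 1/(x+1)" using ln_step[of "x+1"] x1 by (auto simp: b_def add.assoc)
  define l where "l = ln (x+1)"
  have l0: "0 \<le> l" using x1 by (simp add: l_def)
  have eq: "dd k = l * (1/(x+1) - a) + b/(x+1) + a^2/2"
  proof -
    have e1: "ln (x+2) = l + b" by (simp add: b_def l_def)
    have e2: "ln x = l - a" by (simp add: a_def l_def)
    have "dd k = ln (x+2)/(x+1) - (l^2 - (ln x)^2)/2" by (simp add: dd_def x_def l_def)
    also have "\<dots> = (l + b)/(x+1) - (l^2 - (l - a)^2)/2" by (simp only: e1 e2)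
    also have "\<dots> = l * (1/(x+1) - a) + b/(x+1) + a^2/2"
    proof -
      have q1: "(l^2 - (l-a)^2)/2 = l*a - a^2/2" by (simp add: power2_eq_square field_simps)
      have q2: "(l+b)/(x+1) = l/(x+1) + b/(x+1)" by (rule add_divide_distrib)
      have q3: "l*(1/(x+1) - a) = l/(x+1) - l*a" by (simp add: right_diff_distrib)
      show ?thesis unfolding q1 q2 q3 by simp
    qed
    finally show ?thesis .
  qed
  have t1: "\<bar>l * (1/(x+1) - a)\<bar> \<le> l / x^2"
  proof -
    have "\<bar>1/(x+1) - a\<bar> \<le> 1/x - 1/(x+1)" using a1 by auto
    also have "\<dots> = 1/(x*(x+1))" using x1 by (simp add: field_simps)
    also have "\<dots> \<le> 1/x^2" using x1 by (intro divide_left_mono) (auto simp: power2_eq_square)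
    finally have "\<bar>1/(x+1) - a\<bar> \<le> 1/x^2" .
    then have "l * \<bar>1/(x+1) - a\<bar> \<le> l * (1/x^2)" using l0 by (intro mult_left_mono)
    then show ?thesis using l0 by (simp add: abs_mult)
  qed
  have t2: "\<bar>b/(x+1)\<bar> \<le> 1/x^2"
  proof -
    have "b/(x+1) \<le> (1/(x+1))/(x+1)" using b1 x1 by (intro divide_right_mono) auto
    also have "\<dots> = 1/((x+1)^2)" by (simp add: power2_eq_square)
    also have "\<dots> \<le> 1/x^2"
    proof (rule divide_left_mono)
      show "x^2 \<le> (x+1)^2" using x1 by (intro power_mono) auto
      show "0 < (x+1)^2 * x^2" using x1 by simp
    qed simp
    finally show ?thesis using b1 x1 by simp
  qed
  have t3: "\<bar>a^2/2\<bar> \<le> 1/x^2"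
  proof -
    have a0: "0 \<le> a" using a1 x1 by (meson dual_order.trans divide_nonneg_nonneg zero_le_one add_nonneg_nonneg order.trans le_numeral_extra(4))
    have "a^2 \<le> (1/x)^2" using a0 a1 by (intro power_mono) auto
    then have "a^2 \<le> 1/x^2" by (simp add: power_divide)
    moreover have "1/x^2 \<le> 2/x^2" using x1 by (simp add: divide_right_mono)
    ultimately have "a^2 \<le> 2/x^2" by linarith
    then show ?thesis using a0 by simp
  qed
  have "\<bar>dd k\<bar> \<le> l/x^2 + 1/x^2 + 1/x^2" unfolding eq using t1 t2 t3 by linarith
  also have "\<dots> = (ln (real k + 1) + 2) / (real k)^2" by (simp add: l_def x_def add_divide_distrib)
  finally show ?thesis .
qed

lemma dd_summable: "summable (\<lambda>k. \<bar>dd k\<bar>)"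
proof (rule summable_comparison_test)
  have "summable (\<lambda>k. (ln (real k + 1) + 2) / (real k)^2)"
  proof (rule summable_comparison_test_bigo)
    show "summable (\<lambda>k. norm (real k powr (-3/2)))" by (simp add: summable_real_powr_iff)
    show "(\<lambda>k::nat. (ln (real k + 1) + 2) / (real k)^2) \<in> O(\<lambda>k. real k powr (-3/2))" by real_asymp
  qed
  then show "summable (\<lambda>k. (ln (real k + 1) + 2) / (real k)^2)" .
  show "\<exists>N. \<forall>k\<ge>N. norm \<bar>dd k\<bar> \<le> (ln (real k + 1) + 2) / (real k)^2"
    using dd_bound by (intro exI[of _ 1]) auto
qed

lemma SS_diff: "SS n - (1/2) * (ln (real n))^2 = (\<Sum>k<n. dd k)"
proof -
  have "(\<Sum>k<n. ((ln (real (Suc k)))^2/2 - (ln (real k))^2/2)) = (ln (real n))^2/2 - (ln (real 0))^2/2"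
    by (rule sum_lessThan_telescope[where f = "\<lambda>k. (ln (real k))^2/2"])
  then have t: "(\<Sum>k<n. ((ln (real k + 1))^2 - (ln (real k))^2)/2) = (1/2) * (ln (real n))^2"
    by (simp add: diff_divide_distrib add.commute)
  have "SS n = (\<Sum>k<n. ln (real k + 2)/(real k + 1))"
    unfolding SS_def by (intro sum.cong) (auto simp: add.commute)
  then show ?thesis unfolding dd_def sum_subtractf t by simp
qed

lemma SS_bound: "\<bar>SS n - (1/2) * (ln (real n))^2\<bar> \<le> (\<Sum>k. \<bar>dd k\<bar>)"
proof -
  have "\<bar>SS n - (1/2) * (ln (real n))^2\<bar> \<le> (\<Sum>k<n. \<bar>dd k\<bar>)"
    unfolding SS_diff by (rule sum_abs)
  also have "\<dots> \<le> (\<Sum>k. \<bar>dd k\<bar>)" by (rule sum_le_suminf[OF dd_summable]) auto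
  finally show ?thesis .
qed

theorem proposition1:
  shows "(\<lambda>x. nu x - ((1/2) * (ln (1/x))^2 - euler_mascheroni * ln (1/x)))
           \<in> O[at_right 0](\<lambda>_. 1) \<and>
         (\<lambda>n. EK n - (1/2) * (ln (real n))^2) \<in> o(\<lambda>n. ln (real n))"
proof
  show "(\<lambda>x. nu x - ((1/2) * (ln (1/x))^2 - euler_mascheroni * ln (1/x))) \<in> O[at_right 0](\<lambda>_. 1)"
  proof (rule bigoI[where c = 3])
    show "\<forall>\<^sub>F x in at_right 0. norm (nu x - ((1/2) * (ln (1/x))^2 - euler_mascheroni * ln (1/x))) \<le> 3 * norm (1::real)"
      unfolding eventually_at_right_field
    proof (intro exI[of _ 1] conjI allI impI)
      show "(0::real) < 1" by simp
      fix y :: real assume "0 < y" "y < 1"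
      from nu_est[OF this] show "norm (nu y - ((1/2) * (ln (1/y))^2 - euler_mascheroni * ln (1/y))) \<le> 3 * norm (1::real)"
        by simp
    qed
  qed
  define C where "C = (\<Sum>k. \<bar>dd k\<bar>) + 1"
  have "(\<lambda>n. EK n - (1/2) * (ln (real n))^2) \<in> O(\<lambda>_. 1)"
  proof (rule bigoI[where c = C])
    show "\<forall>\<^sub>F n in at_top. norm (EK n - (1/2) * (ln (real n))^2) \<le> C * norm (1::real)"
    proof (intro always_eventually allI)
      fix n
      have "\<bar>EK n - SS n\<bar> \<le> 1" using EK_est[of n] by linarith
      then show "norm (EK n - (1/2) * (ln (real n))^2) \<le> C * norm (1::real)"
        using SS_bound[of n] unfolding C_def by simp
    qed
  qed
  moreover have "(\<lambda>_::nat. 1::real) \<in> o(\<lambda>n. ln (real n))" by real_asymp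
  ultimately show "(\<lambda>n. EK n - (1/2) * (ln (real n))^2) \<in> o(\<lambda>n. ln (real n))"
    by (rule landau_o.big_small_trans)
qed

end
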